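(* Let $\mathbf{X}\in\mathbb{R}^{m\times n}$, let $\Theta\subseteq[m]\times[n]$ be an index set of observed entries, let $\gamma_r,\gamma_c\ge 0$, and let $\mathcal{E}_r\subseteq[m]\times[m]$ and $\mathcal{E}_c\subseteq[n]\times[n]$ be edge sets of a row graph and a column graph. Assume: (A1) the graphs $\mathcal{E}_r$ (on vertex set $[m]$) and $\mathcal{E}_c$ (on vertex set $[n]$) are connected, i.e. for any two distinct rows $i\neq j$ there is a sequence $i\to k\to\cdots\to l\to j$ with $(i,k),\ldots,(l,j)\in\mathcal{E}_r$, and analogously for columns with $\mathcal{E}_c$; (A2) the function $\Omega:[0,\infty)\to[0,\infty)$ is concave and continuously differentiable on $(0,\infty)$, satisfies $\Omega(0)=0$, is increasing on $[0,\infty)$, and has finite directional (right) derivative at the origin. Consider the objective $$f(\mathbf{U})=\tfrac12\lVert \mathcal{P}_\Theta(\mathbf{X})-\mathcal{P}_\Theta(\mathbf{U})\rVert_F^2+\gamma_r\sum_{(i,j)\in\mathcal{E}_r}\Omega(\lVert \mathbf{U}_{i\cdot}-\mathbf{U}_{j\cdot}\rVert_2)+\gamma_c\sum_{(i,j)\in\mathcal{E}_c}\Omega(\lVert \mathbf{U}_{\cdot i}-\mathbf{U}_{\cdot j}\rVert_2),\qquad \mathbf{U}\in\mathbb{R}^{m\times n}.$$ Starting from any $\mathbf{U}_0\in\mathbb{R}^{m\times n}$, define the sequence $(\mathbf{U}_t)_{t\ge0}$ by $$\mathbf{U}_{t+1}=\arg\min_{\mathbf{U}}\ \tfrac12\lVert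 \tilde{\mathbf{X}}_t-\mathbf{U}\rVert_F^2+\gamma_r\sum_{(i,j)\in\mathcal{E}_r}w^{(t)}_{r,ij}\lVert \mathbf{U}_{i\cdot}-\mathbf{U}_{j\cdot}\rVert_2+\gamma_c\sum_{(i,j)\in\mathcal{E}_c}w^{(t)}_{c,ij}\lVert \mathbf{U}_{\cdot i}-\mathbf{U}_{\cdot j}\rVert_2,$$ where $\tilde{\mathbf{X}}_t=\mathcal{P}_\Theta(\mathbf{X})+\mathcal{P}_{\Theta^c}(\mathbf{U}_t)$, $w^{(t)}_{r,ij}=\Omega'(\lVert (\mathbf{U}_t)_{i\cdot}-(\mathbf{U}_t)_{j\cdot}\rVert_2)$ and $w^{(t)}_{c,ij}=\Omega'(\lVert (\mathbf{U}_t)_{\cdot i}-(\mathbf{U}_t)_{\cdot j}\rVert_2)$ (the minimizer is unique since the objective is strongly convex). Then the sequence $(\mathbf{U}_t)$ has at least one limit point, and every limit point is a stationary point of $f$.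
   Context: For a matrix $\mathbf{U}$, $\mathbf{U}_{i\cdot}$ denotes its $i$th row and $\mathbf{U}_{\cdot i}$ its $i$th column; $[m]=\{1,\dots,m\}$. $\mathcal{P}_\Theta$ is the projection onto the index set $\Theta$: $[\mathcal{P}_\Theta(\mathbf{X})]_{ij}=X_{ij}$ if $(i,j)\in\Theta$ and $0$ otherwise; $\Theta^c$ is the complement of $\Theta$ in $[m]\times[n]$. $\Omega'(0)$ denotes the right derivative of $\Omega$ at $0$. A point $\mathbf{U}$ is a stationary point of $f$ if the directional derivative $f'(\mathbf{U};\mathbf{V})\ge 0$ for every direction $\mathbf{V}\in\mathbb{R}^{m\times n}$. *)

theory Defs
  imports "HOL-Analysis.Analysis"
begin

text \<open>Matrices in R^{m x n} are elements of real^'n^'m; row i is U $ i,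
  column j is column j U. The norm on real^'n^'m is the Frobenius norm.\<close>

definition proj :: "('m \<times> 'n) set \<Rightarrow> real^'n^'m \<Rightarrow> real^'n^'m" where
  "proj \<Theta> X = (\<chi> i j. if (i, j) \<in> \<Theta> then X $ i $ j else 0)"

definition objective ::
  "real^'n^'m \<Rightarrow> ('m \<times> 'n) set \<Rightarrow> real \<Rightarrow> real \<Rightarrow> ('m \<times> 'm) set \<Rightarrow> ('n \<times> 'n) set
   \<Rightarrow> (real \<Rightarrow> real) \<Rightarrow> real^'n^'m \<Rightarrow> real" where
  "objective X \<Theta> \<gamma>r \<gamma>c Er Ec \<Omega> U =
     (1/2) * (norm (proj \<Theta> X - proj \<Theta> U))\<^sup>2
     + \<gamma>r * (\<Sum>(i, j)\<in>Er. \<Omega> (norm (U $ i - U $ j)))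
     + \<gamma>c * (\<Sum>(i, j)\<in>Ec. \<Omega> (norm (column i U - column j U)))"

definition surrogate ::
  "real^'n^'m \<Rightarrow> ('m \<times> 'n) set \<Rightarrow> real \<Rightarrow> real \<Rightarrow> ('m \<times> 'm) set \<Rightarrow> ('n \<times> 'n) set
   \<Rightarrow> (real \<Rightarrow> real) \<Rightarrow> real^'n^'m \<Rightarrow> real^'n^'m \<Rightarrow> real" where
  "surrogate X \<Theta> \<gamma>r \<gamma>c Er Ec d\<Omega> Ut U =
     (let Xt = proj \<Theta> X + proj (- \<Theta>) Ut in
     (1/2) * (norm (Xt - U))\<^sup>2
     + \<gamma>r * (\<Sum>(i, j)\<in>Er. d\<Omega> (norm (Ut $ i - Ut $ j)) * norm (U $ i - U $ j))
     + \<gamma>c * (\<Sum>(i, j)\<in>Ec. d\<Omega> (norm (column i Ut - column j Ut)) * norm (column i U - column j U)))"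

definition has_dir_deriv :: "('a::real_vector \<Rightarrow> real) \<Rightarrow> 'a \<Rightarrow> 'a \<Rightarrow> real \<Rightarrow> bool" where
  "has_dir_deriv f U V d \<longleftrightarrow> ((\<lambda>\<tau>. (f (U + \<tau> *\<^sub>R V) - f U) / \<tau>) \<longlongrightarrow> d) (at_right 0)"

definition stationary_point :: "('a::real_vector \<Rightarrow> real) \<Rightarrow> 'a \<Rightarrow> bool" where
  "stationary_point f U \<longleftrightarrow> (\<forall>V. \<exists>d. has_dir_deriv f U V d \<and> d \<ge> 0)"

definition limit_point :: "(nat \<Rightarrow> 'a::topological_space) \<Rightarrow> 'a \<Rightarrow> bool" where
  "limit_point s L \<longleftrightarrow> (\<exists>r. strict_mono r \<and> (s \<circ> r) \<longlonglongrightarrow> L)"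

end

theory Submission
  imports Defs
begin


lemma tangent_ineq:
  fixes \<Omega> d\<Omega> :: "real \<Rightarrow> real"
  assumes concave: "concave_on {0..} \<Omega>"
    and deriv: "\<forall>x\<ge>0. (\<Omega> has_real_derivative d\<Omega> x) (at x within {0..})"
    and c: "c \<ge> 0" and x: "x \<ge> 0"
  shows "\<Omega> x \<le> \<Omega> c + d\<Omega> c * (x - c)"
proof (cases x c rule: linorder_cases)
  case less
  then have cpos: "c > 0" using x by simp
  have cv: "convex_on {0..} (\<lambda>x. - \<Omega> x)" using concave by (simp add: concave_on_def)
  have d: "((\<lambda>x. - \<Omega> x) has_real_derivative - d\<Omega> c) (at c within {0..})"
    using deriv c by (auto intro: DERIV_minus)
  have "(\<lambda>x. - \<Omega> x) x - (\<lambda>x. - \<Omega> x) c \<ge> (- d\<Omega> c) * (x - c)"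
    by (rule convex_on_imp_above_tangent[OF cv _ _ _ d]) (use cpos x in \<open>auto simp: is_interval_connected\<close>)
  then show ?thesis by (simp add: algebra_simps)
next
  case equal then show ?thesis by simp
next
  case greater
  have lim: "((\<lambda>y. (\<Omega> y - \<Omega> c) / (y - c)) \<longlongrightarrow> d\<Omega> c) (at_right c)"
  proof -
    have "(\<Omega> has_real_derivative d\<Omega> c) (at c within {0..})" using deriv c by simp
    then have "((\<lambda>y. (\<Omega> y - \<Omega> c) / (y - c)) \<longlongrightarrow> d\<Omega> c) (at c within {0..})"
      by (simp add: has_field_derivative_iff)
    then show ?thesis by (rule tendsto_within_subset) (use c in auto)
  qed
  have ev: "eventually (\<lambda>y. (\<Omega> x - \<Omega> c) / (x - c) \<le> (\<Omega> y - \<Omega> c) / (y - c)) (at_right c)"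
    using eventually_at_right_real[OF greater]
  proof eventually_elim
    fix y assume y: "y \<in> {c<..<x}"
    define t where "t = (y - c) / (x - c)"
    have xc: "x - c > 0" using greater by simp
    have yc: "y - c > 0" using y by simp
    have tx: "t * (x - c) = y - c" using xc by (simp add: t_def)
    have t: "t \<ge> 0" "t \<le> 1" using y xc yc by (auto simp: t_def divide_le_eq_1)
    have "(1 - t) * \<Omega> c + t * \<Omega> x \<le> \<Omega> ((1 - t) *\<^sub>R c + t *\<^sub>R x)"
      using concave_onD[OF concave t] c x by auto
    also have "(1 - t) *\<^sub>R c + t *\<^sub>R x = c + t * (x - c)" by (simp add: algebra_simps)
    also have "\<dots> = y" using tx by simp
    finally have "t * (\<Omega> x - \<Omega> c) \<le> \<Omega> y - \<Omega> c" by (simp add: algebra_simps)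
    then have "t * (\<Omega> x - \<Omega> c) / (y - c) \<le> (\<Omega> y - \<Omega> c) / (y - c)"
      using yc by (simp add: divide_right_mono)
    moreover have "t * (\<Omega> x - \<Omega> c) / (y - c) = (\<Omega> x - \<Omega> c) / (x - c)"
      using xc yc by (simp add: t_def)
    ultimately show "(\<Omega> x - \<Omega> c) / (x - c) \<le> (\<Omega> y - \<Omega> c) / (y - c)" by simp
  qed
  have "(\<Omega> x - \<Omega> c) / (x - c) \<le> d\<Omega> c"
    by (rule tendsto_lowerbound[OF lim ev]) simp
  then have "(\<Omega> x - \<Omega> c) \<le> d\<Omega> c * (x - c)" using greater by (simp add: pos_divide_le_eq)
  then show ?thesis by simp
qed


context
  fixes \<Omega> d\<Omega> :: "real \<Rightarrow> real"
  assumes concave: "concave_on {0..} \<Omega>"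
    and deriv: "\<forall>x\<ge>0. (\<Omega> has_real_derivative d\<Omega> x) (at x within {0..})"
begin

lemma dOmega_nonneg:
  assumes incr: "mono_on {0..} \<Omega>" and x: "x \<ge> 0"
  shows "d\<Omega> x \<ge> 0"
proof -
  have "\<Omega> (x+1) \<le> \<Omega> x + d\<Omega> x * (x + 1 - x)"
    by (rule tangent_ineq[OF concave deriv]) (use x in auto)
  moreover have "\<Omega> x \<le> \<Omega> (x+1)" using incr x by (auto intro: mono_onD)
  ultimately show ?thesis by simp
qed

lemma Omega_cont: "continuous_on {0..} \<Omega>"
  by (rule DERIV_continuous_on) (use deriv in auto)

lemma dOmega_le0: assumes x: "x \<ge> 0" shows "d\<Omega> x \<le> d\<Omega> 0"
proof (cases "x = 0")
  case False
  have "\<Omega> x \<le> \<Omega> 0 + d\<Omega> 0 * (x - 0)" by (rule tangent_ineq[OF concave deriv]) (use x in auto)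
  moreover have "\<Omega> 0 \<le> \<Omega> x + d\<Omega> x * (0 - x)" by (rule tangent_ineq[OF concave deriv]) (use x in auto)
  ultimately have "0 \<le> (d\<Omega> 0 - d\<Omega> x) * x" by (simp add: algebra_simps)
  then show ?thesis using x False by (simp add: zero_le_mult_iff)
qed simp

lemma dOmega_right_cont: "(d\<Omega> \<longlongrightarrow> d\<Omega> 0) (at_right 0)"
proof (rule order_tendstoI)
  fix a assume A: "a > d\<Omega> 0"
  show "eventually (\<lambda>x. d\<Omega> x < a) (at_right 0)"
    by (rule eventually_mono[OF eventually_at_right_less]) (metis dOmega_le0 less_imp_le le_less_trans A)
next
  fix a assume a: "a < d\<Omega> 0"
  define b where "b = (a + d\<Omega> 0) / 2"
  have ab: "a < b" "b < d\<Omega> 0" using a by (auto simp: b_def)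
  have lim: "((\<lambda>y. (\<Omega> y - \<Omega> 0) / (y - 0)) \<longlongrightarrow> d\<Omega> 0) (at_right 0)"
    using deriv unfolding has_field_derivative_iff
    by (metis at_within_Ici_at_right order_refl)
  have "eventually (\<lambda>y. b < (\<Omega> y - \<Omega> 0) / (y - 0) \<and> y > 0) (at_right 0)"
    by (rule eventually_conj[OF order_tendstoD(1)[OF lim ab(2)] eventually_at_right_less])
  then obtain y where y: "y > 0" "b < (\<Omega> y - \<Omega> 0) / y"
    using eventually_happens[of _ "at_right (0::real)"] by (auto simp: trivial_limit_at_right_real)
  have contO: "(\<Omega> \<longlongrightarrow> \<Omega> 0) (at_right 0)"
    using Omega_cont unfolding continuous_on_def
    by (metis at_within_Ici_at_right atLeast_iff order_refl)
  have L2: "((\<lambda>x. (\<Omega> y - \<Omega> x) / (y - x)) \<longlongrightarrow> (\<Omega> y - \<Omega> 0) / (y - 0)) (at_right 0)"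
    using y by (intro tendsto_intros contO) auto
  have ev1: "eventually (\<lambda>x. a < (\<Omega> y - \<Omega> x) / (y - x)) (at_right 0)"
    by (rule order_tendstoD(1)[OF L2]) (use ab y in simp)
  have ev2: "eventually (\<lambda>x. x \<in> {0<..<y}) (at_right 0)"
    using eventually_at_right_real[OF y(1)] .
  show "eventually (\<lambda>x. a < d\<Omega> x) (at_right 0)"
    using ev1 ev2
  proof eventually_elim
    fix x assume h: "a < (\<Omega> y - \<Omega> x) / (y - x)" "x \<in> {0<..<y}"
    have "\<Omega> y \<le> \<Omega> x + d\<Omega> x * (y - x)" by (rule tangent_ineq[OF concave deriv]) (use h y in auto)
    then have "(\<Omega> y - \<Omega> x) / (y - x) \<le> d\<Omega> x" using h by (simp add: field_simps)
    then show "a < d\<Omega> x" using h by simp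
  qed
qed

lemma dOmega_cont:
  assumes cont_deriv: "continuous_on {0<..} d\<Omega>"
  shows "continuous_on {0..} d\<Omega>"
  unfolding continuous_on_eq_continuous_within
proof
  fix x :: real assume "x \<in> {0..}"
  show "continuous (at x within {0..}) d\<Omega>"
  proof (cases "x = 0")
    case True
    then show ?thesis using dOmega_right_cont
      by (simp add: continuous_within at_within_Ici_at_right)
  next
    case False
    then have "x \<in> {0<..}" using \<open>x \<in> {0..}\<close> by auto
    then have "isCont d\<Omega> x" using cont_deriv by (simp add: continuous_on_eq_continuous_at)
    then show ?thesis by (simp add: continuous_at_imp_continuous_within)
  qed
qed

end


definition nd :: "'a::real_inner \<Rightarrow> 'a \<Rightarrow> real" where
  "nd a c = (if a = 0 then norm c else inner c (sgn a))"

lemma norm_line_deriv: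
  fixes a c :: "'a::real_inner"
  shows "((\<lambda>\<tau>. norm (a + \<tau> *\<^sub>R c)) has_real_derivative nd a c) (at 0 within {0..})"
proof (cases "a = 0")
  case True
  have "((\<lambda>\<tau>. \<tau> * norm c) has_real_derivative norm c) (at 0 within {0..})"
    by (auto intro!: derivative_eq_intros)
  then have "((\<lambda>\<tau>. norm (a + \<tau> *\<^sub>R c)) has_real_derivative norm c) (at 0 within {0..})"
    by (rule has_field_derivative_transform_within[where d=1]) (auto simp: True)
  then show ?thesis by (simp add: True nd_def)
next
  case False
  have d1: "((\<lambda>\<tau>::real. a + \<tau> *\<^sub>R c) has_derivative (\<lambda>h. h *\<^sub>R c)) (at 0 within {0..})"
    by (auto intro!: derivative_eq_intros)
  have d2: "(norm has_derivative (\<lambda>h. inner h (sgn a))) (at (a + 0 *\<^sub>R c))"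
    using has_derivative_norm[of a] False by simp
  have "((\<lambda>\<tau>. norm (a + \<tau> *\<^sub>R c)) has_derivative (\<lambda>h. inner (h *\<^sub>R c) (sgn a))) (at 0 within {0..})"
    using has_derivative_compose[OF d1 d2] by simp
  moreover have "(\<lambda>h. inner (h *\<^sub>R c) (sgn a)) = (*) (nd a c)"
    using False by (auto simp: nd_def)
  ultimately show ?thesis by (simp add: has_field_derivative_def)
qed

lemma norm_sq_mat: "(norm (A::real^'n^'m))\<^sup>2 = (\<Sum>i\<in>UNIV. \<Sum>j\<in>UNIV. (A$i$j)\<^sup>2)"
  unfolding power2_norm_eq_inner by (simp add: inner_vec_def power2_eq_square)

lemma column_lin: "column i (A + t *\<^sub>R B) = column i A + t *\<^sub>R column i B"
  by (simp add: column_def vec_eq_iff)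

lemma column_diff: "column i (A - B) = column i A - column i B"
  by (simp add: column_def vec_eq_iff)

lemma proj_nth: "proj \<Theta> X $ i $ j = (if (i, j) \<in> \<Theta> then X $ i $ j else 0)"
  by (simp add: proj_def)

lemma cont_column: "continuous_on UNIV (\<lambda>V::real^'n^'m. column i V)"
  unfolding column_def by (intro continuous_intros)

lemma cont_proj: "continuous_on UNIV (\<lambda>V::real^'n^'m. proj \<Theta> V)"
  unfolding proj_def
proof (intro continuous_intros)
  fix i j show "continuous_on UNIV (\<lambda>x::real^'n^'m. if (i, j) \<in> \<Theta> then x $ i $ j else 0)"
    by (cases "(i, j) \<in> \<Theta>") (auto intro!: continuous_on_component continuous_on_id continuous_on_const)
qed

lemma cont_comp_nonneg:
  assumes "continuous_on {0..} g" "continuous_on UNIV h" "\<And>x. h x \<ge> (0::real)"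
  shows "continuous_on UNIV (\<lambda>x. g (h x))"
  using continuous_on_compose2[OF assms(1) assms(2)] assms(3) by auto

lemma cont_sum_pairs:
  assumes "\<And>i j. continuous_on UNIV (\<lambda>x. F i j x)"
  shows "continuous_on UNIV (\<lambda>x. \<Sum>(i, j)\<in>E. (F i j x :: real))"
  by (intro continuous_on_sum) (auto simp: case_prod_beta assms)



definition cterm :: "('m \<times> 'm) set \<Rightarrow> ('n \<times> 'n) set \<Rightarrow> real \<Rightarrow> real \<Rightarrow> (real \<Rightarrow> real) \<Rightarrow> (real \<Rightarrow> real)
   \<Rightarrow> real^'n^'m \<Rightarrow> real" where
  "cterm Er Ec \<gamma>r \<gamma>c \<Omega> d\<Omega> V =
     \<gamma>r * (\<Sum>(i, j)\<in>Er. \<Omega> (norm (V $ i - V $ j)) - d\<Omega> (norm (V $ i - V $ j)) * norm (V $ i - V $ j))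
   + \<gamma>c * (\<Sum>(i, j)\<in>Ec. \<Omega> (norm (column i V - column j V)) - d\<Omega> (norm (column i V - column j V)) * norm (column i V - column j V))"

lemma sum_tangent:
  fixes \<Omega> d\<Omega> :: "real \<Rightarrow> real"
  assumes concave: "concave_on {0..} \<Omega>"
    and deriv: "\<forall>x\<ge>0. (\<Omega> has_real_derivative d\<Omega> x) (at x within {0..})"
    and g: "g \<ge> 0"
  shows "g * (\<Sum>(i, j)\<in>E. \<Omega> (norm (b i j :: 'a::real_normed_vector)))
    \<le> g * (\<Sum>(i, j)\<in>E. d\<Omega> (norm (a i j :: 'a)) * norm (b i j))
     + g * (\<Sum>(i, j)\<in>E. \<Omega> (norm (a i j)) - d\<Omega> (norm (a i j)) * norm (a i j))"
proof -
  have "(\<Sum>(i, j)\<in>E. \<Omega> (norm (b i j)))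
     \<le> (\<Sum>(i, j)\<in>E. d\<Omega> (norm (a i j)) * norm (b i j) + (\<Omega> (norm (a i j)) - d\<Omega> (norm (a i j)) * norm (a i j)))"
  proof (rule sum_mono)
    fix p assume "p \<in> E"
    obtain i j where p: "p = (i, j)" by fastforce
    have "\<Omega> (norm (b i j)) \<le> \<Omega> (norm (a i j)) + d\<Omega> (norm (a i j)) * (norm (b i j) - norm (a i j))"
      by (rule tangent_ineq[OF concave deriv]) auto
    then show "(case p of (i, j) \<Rightarrow> \<Omega> (norm (b i j)))
      \<le> (case p of (i, j) \<Rightarrow> d\<Omega> (norm (a i j)) * norm (b i j) + (\<Omega> (norm (a i j)) - d\<Omega> (norm (a i j)) * norm (a i j)))"
      by (simp add: p algebra_simps)
  qed
  also have "\<dots> = (\<Sum>(i, j)\<in>E. d\<Omega> (norm (a i j)) * norm (b i j)) + (\<Sum>(i, j)\<in>E. \<Omega> (norm (a i j)) - d\<Omega> (norm (a i j)) * norm (a i j))"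
    by (simp add: sum.distrib[symmetric] case_prod_beta)
  finally show ?thesis using g by (simp add: distrib_left[symmetric] mult_left_mono)
qed

lemma sum_tangent_eq:
  "(\<Sum>(i, j)\<in>E. d\<Omega> (norm (a i j)) * norm (a i j)) + (\<Sum>(i, j)\<in>E. \<Omega> (norm (a i j)) - d\<Omega> (norm (a i j)) * norm (a i j))
   = (\<Sum>(i, j)\<in>E. \<Omega> (norm (a i j)))"
  unfolding sum.distrib[symmetric] by (rule sum.cong) auto

lemma data_le:
  "(norm (proj \<Theta> X - proj \<Theta> W))\<^sup>2 \<le> (norm (proj \<Theta> X + proj (- \<Theta>) V - W))\<^sup>2"
  unfolding norm_sq_mat
proof (intro sum_mono)
  fix i j
  show "((proj \<Theta> X - proj \<Theta> W) $ i $ j)\<^sup>2 \<le> ((proj \<Theta> X + proj (- \<Theta>) V - W) $ i $ j)\<^sup>2"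
    by (cases "(i, j) \<in> \<Theta>") (simp_all add: proj_nth)
qed

lemma data_eq:
  "proj \<Theta> X - proj \<Theta> V = proj \<Theta> X + proj (- \<Theta>) V - V"
  by (simp add: vec_eq_iff proj_nth)

lemma arith_combine:
  fixes a b r1 r2 r3 c1 c2 c3 :: real
  shows "a \<le> b \<Longrightarrow> r1 \<le> r2 + r3 \<Longrightarrow> c1 \<le> c2 + c3 \<Longrightarrow> (1/2)*a + r1 + c1 \<le> ((1/2)*b + r2 + c2) + (r3 + c3)"
  by linarith

lemma arith_eq:
  fixes a b r1 r2 r3 c1 c2 c3 g h :: real
  assumes "a = b" "r2 + r3 = r1" "c2 + c3 = c1"
  shows "(1/2)*a + g*r1 + h*c1 = ((1/2)*b + g*r2 + h*c2) + (g*r3 + h*c3)"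
  using assms by (auto simp: algebra_simps)

lemma equal_at:
  "objective X \<Theta> \<gamma>r \<gamma>c Er Ec \<Omega> V
     = surrogate X \<Theta> \<gamma>r \<gamma>c Er Ec d\<Omega> V V + cterm Er Ec \<gamma>r \<gamma>c \<Omega> d\<Omega> V"
  apply (unfold objective_def surrogate_def cterm_def Let_def)
  apply (rule arith_eq)
    apply (subst data_eq[of \<Theta> X V], rule refl)
   apply (rule sum_tangent_eq)
  apply (rule sum_tangent_eq)
  done

lemma cont_objective:
  assumes "continuous_on {0..} \<Omega>"
  shows "continuous_on UNIV (objective X \<Theta> \<gamma>r \<gamma>c Er Ec \<Omega>)"
  unfolding objective_def
  by (intro continuous_intros cont_sum_pairs cont_comp_nonneg[OF assms] cont_column cont_proj) auto

lemma cont_row_pen: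
  assumes "continuous_on {0..} g"
  shows "continuous_on UNIV (\<lambda>V::real^'n^'m. g (norm (V $ i - V $ j)))"
  by (rule cont_comp_nonneg[OF assms]) (auto intro!: continuous_intros)

lemma cont_col_pen:
  assumes "continuous_on {0..} g"
  shows "continuous_on UNIV (\<lambda>V::real^'n^'m. g (norm (column i V - column j V)))"
  by (rule cont_comp_nonneg[OF assms]) (auto intro!: continuous_intros cont_column)

lemma cont_G:
  assumes "continuous_on {0..} \<Omega>" "continuous_on {0..} d\<Omega>"
  shows "continuous_on UNIV (\<lambda>V::real^'n^'m. surrogate X \<Theta> \<gamma>r \<gamma>c Er Ec d\<Omega> V W + cterm Er Ec \<gamma>r \<gamma>c \<Omega> d\<Omega> V)"
  unfolding surrogate_def cterm_def Let_def
  by (intro continuous_on_add continuous_on_mult continuous_on_diff continuous_on_const cont_sum_pairs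
      cont_row_pen[OF assms(1)] cont_row_pen[OF assms(2)] cont_col_pen[OF assms(1)] cont_col_pen[OF assms(2)]
      continuous_on_power continuous_on_norm cont_proj continuous_on_id continuous_on_norm
      continuous_on_component cont_column)



lemma majorize:
  fixes \<Omega> d\<Omega> :: "real \<Rightarrow> real"
  assumes concave: "concave_on {0..} \<Omega>"
    and deriv: "\<forall>x\<ge>0. (\<Omega> has_real_derivative d\<Omega> x) (at x within {0..})"
    and gr: "\<gamma>r \<ge> 0" and gc: "\<gamma>c \<ge> 0"
  shows "objective X \<Theta> \<gamma>r \<gamma>c Er Ec \<Omega> W
     \<le> surrogate X \<Theta> \<gamma>r \<gamma>c Er Ec d\<Omega> V W + cterm Er Ec \<gamma>r \<gamma>c \<Omega> d\<Omega> V"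
proof -
  have r: "\<gamma>r * (\<Sum>(i, j)\<in>Er. \<Omega> (norm (W $ i - W $ j)))
    \<le> \<gamma>r * (\<Sum>(i, j)\<in>Er. d\<Omega> (norm (V $ i - V $ j)) * norm (W $ i - W $ j))
     + \<gamma>r * (\<Sum>(i, j)\<in>Er. \<Omega> (norm (V $ i - V $ j)) - d\<Omega> (norm (V $ i - V $ j)) * norm (V $ i - V $ j))"
    by (rule sum_tangent[OF concave deriv gr])
  have c: "\<gamma>c * (\<Sum>(i, j)\<in>Ec. \<Omega> (norm (column i W - column j W)))
    \<le> \<gamma>c * (\<Sum>(i, j)\<in>Ec. d\<Omega> (norm (column i V - column j V)) * norm (column i W - column j W))
     + \<gamma>c * (\<Sum>(i, j)\<in>Ec. \<Omega> (norm (column i V - column j V)) - d\<Omega> (norm (column i V - column j V)) * norm (column i V - column j V))"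
    by (rule sum_tangent[OF concave deriv gc])
  have d: "(norm (proj \<Theta> X - proj \<Theta> W))\<^sup>2 \<le> (norm (proj \<Theta> X + proj (- \<Theta>) V - W))\<^sup>2"
    by (rule data_le)
  show ?thesis
    apply (unfold objective_def surrogate_def cterm_def Let_def)
    apply (rule arith_combine)
      apply (rule d)
     apply (rule r)
    apply (rule c)
    done
qed

lemma sq_line_deriv:
  fixes A B :: "'a::real_inner"
  shows "((\<lambda>\<tau>. (1/2) * (norm (A - \<tau> *\<^sub>R B))\<^sup>2) has_real_derivative - inner A B) (at 0 within S)"
proof -
  have eq: "(\<lambda>\<tau>. (1/2) * (norm (A - \<tau> *\<^sub>R B))\<^sup>2)
     = (\<lambda>\<tau>. (1/2) * inner A A - \<tau> * inner A B + (1/2) * (\<tau> * \<tau>) * inner B B)"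
    by (rule ext) (simp add: power2_norm_eq_inner inner_diff_left inner_diff_right inner_commute algebra_simps)
  have "((\<lambda>\<tau>. (1/2) * inner A A - \<tau> * inner A B + (1/2) * (\<tau> * \<tau>) * inner B B) has_real_derivative
        0 - 1 * inner A B + (1/2) * (1 * 0 + 1 * 0) * inner B B) (at 0 within S)"
    by (intro DERIV_add DERIV_diff DERIV_cmult DERIV_const DERIV_mult DERIV_ident DERIV_cmult_right)
  then show ?thesis unfolding eq by simp
qed

lemma Omega_line_deriv:
  fixes a c :: "'a::real_inner"
  assumes deriv: "\<forall>x\<ge>0. (\<Omega> has_real_derivative d\<Omega> x) (at x within {0..})"
  shows "((\<lambda>\<tau>. \<Omega> (norm (a + \<tau> *\<^sub>R c))) has_real_derivative d\<Omega> (norm a) * nd a c) (at 0 within {0..})"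
proof -
  have h: "(\<Omega> has_real_derivative d\<Omega> (norm a)) (at (norm (a + 0 *\<^sub>R c)) within {0..})"
    using deriv by simp
  have "(\<Omega> has_real_derivative d\<Omega> (norm a)) (at (norm (a + 0 *\<^sub>R c)) within ((\<lambda>\<tau>. norm (a + \<tau> *\<^sub>R c)) ` {0..}))"
    by (rule has_field_derivative_subset[OF h]) auto
  from DERIV_image_chain[OF this norm_line_deriv]
  show ?thesis by (simp add: o_def)
qed

lemma DERIV_sum_pairs:
  assumes "\<And>i j. (i, j) \<in> E \<Longrightarrow> ((\<lambda>\<tau>. F i j \<tau>) has_real_derivative F' i j) (at 0 within S)"
  shows "((\<lambda>\<tau>. \<Sum>(i, j)\<in>E. F i j \<tau>) has_real_derivative (\<Sum>(i, j)\<in>E. F' i j)) (at 0 within S)"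
  by (rule DERIV_sum) (use assms in auto)

lemma inner_proj:
  "inner (proj \<Theta> X - proj \<Theta> L) (proj \<Theta> (V::real^'n^'m)) = inner (proj \<Theta> X - proj \<Theta> L) V"
  unfolding inner_vec_def
proof (intro sum.cong refl)
  fix i j
  show "(proj \<Theta> X - proj \<Theta> L) $ i $ j \<bullet> proj \<Theta> V $ i $ j = (proj \<Theta> X - proj \<Theta> L) $ i $ j \<bullet> V $ i $ j"
    by (cases "(i, j) \<in> \<Theta>") (simp_all add: proj_nth)
qed

lemma obj_line:
  "objective X \<Theta> \<gamma>r \<gamma>c Er Ec \<Omega> (L + \<tau> *\<^sub>R V) =
     (1/2) * (norm ((proj \<Theta> X - proj \<Theta> L) - \<tau> *\<^sub>R proj \<Theta> V))\<^sup>2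
   + \<gamma>r * (\<Sum>(i, j)\<in>Er. \<Omega> (norm ((L $ i - L $ j) + \<tau> *\<^sub>R (V $ i - V $ j))))
   + \<gamma>c * (\<Sum>(i, j)\<in>Ec. \<Omega> (norm ((column i L - column j L) + \<tau> *\<^sub>R (column i V - column j V))))"
proof -
  have h1: "proj \<Theta> X - proj \<Theta> (L + \<tau> *\<^sub>R V) = (proj \<Theta> X - proj \<Theta> L) - \<tau> *\<^sub>R proj \<Theta> V"
    by (simp add: vec_eq_iff proj_nth)
  have h2: "\<And>i j. (L + \<tau> *\<^sub>R V) $ i - (L + \<tau> *\<^sub>R V) $ j = (L $ i - L $ j) + \<tau> *\<^sub>R (V $ i - V $ j)"
    by (simp add: algebra_simps)
  have h3: "\<And>i j. column i (L + \<tau> *\<^sub>R V) - column j (L + \<tau> *\<^sub>R V) = (column i L - column j L) + \<tau> *\<^sub>R (column i V - column j V)"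
    by (simp add: column_lin algebra_simps)
  show ?thesis unfolding objective_def h1 h2 h3 ..
qed

lemma sur_line:
  "surrogate X \<Theta> \<gamma>r \<gamma>c Er Ec d\<Omega> L (L + \<tau> *\<^sub>R V) =
     (1/2) * (norm ((proj \<Theta> X - proj \<Theta> L) - \<tau> *\<^sub>R V))\<^sup>2
   + \<gamma>r * (\<Sum>(i, j)\<in>Er. d\<Omega> (norm (L $ i - L $ j)) * norm ((L $ i - L $ j) + \<tau> *\<^sub>R (V $ i - V $ j)))
   + \<gamma>c * (\<Sum>(i, j)\<in>Ec. d\<Omega> (norm (column i L - column j L)) * norm ((column i L - column j L) + \<tau> *\<^sub>R (column i V - column j V)))"
proof -
  have h1: "proj \<Theta> X + proj (- \<Theta>) L - (L + \<tau> *\<^sub>R V) = (proj \<Theta> X - proj \<Theta> L) - \<tau> *\<^sub>R V"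
    by (simp add: vec_eq_iff proj_nth)
  have h2: "\<And>i j. (L + \<tau> *\<^sub>R V) $ i - (L + \<tau> *\<^sub>R V) $ j = (L $ i - L $ j) + \<tau> *\<^sub>R (V $ i - V $ j)"
    by (simp add: algebra_simps)
  have h3: "\<And>i j. column i (L + \<tau> *\<^sub>R V) - column j (L + \<tau> *\<^sub>R V) = (column i L - column j L) + \<tau> *\<^sub>R (column i V - column j V)"
    by (simp add: column_lin algebra_simps)
  show ?thesis unfolding surrogate_def Let_def h1 h2 h3 ..
qed

definition Dval where
  "Dval X \<Theta> \<gamma>r \<gamma>c Er Ec d\<Omega> L V =
     - inner (proj \<Theta> X - proj \<Theta> L) V
   + \<gamma>r * (\<Sum>(i, j)\<in>Er. d\<Omega> (norm (L $ i - L $ j)) * nd (L $ i - L $ j) (V $ i - V $ j))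
   + \<gamma>c * (\<Sum>(i, j)\<in>Ec. d\<Omega> (norm (column i L - column j L)) * nd (column i L - column j L) (column i V - column j V))"

lemma phi_deriv:
  fixes X L V :: "real^'n^'m"
  assumes deriv: "\<forall>x\<ge>0. (\<Omega> has_real_derivative d\<Omega> x) (at x within {0..})"
  shows "((\<lambda>\<tau>. objective X \<Theta> \<gamma>r \<gamma>c Er Ec \<Omega> (L + \<tau> *\<^sub>R V)) has_real_derivative
          Dval X \<Theta> \<gamma>r \<gamma>c Er Ec d\<Omega> L V) (at 0 within {0..})"
proof -
  have d0: "((\<lambda>\<tau>. (1/2) * (norm ((proj \<Theta> X - proj \<Theta> L) - \<tau> *\<^sub>R proj \<Theta> V))\<^sup>2) has_real_derivative
     - inner (proj \<Theta> X - proj \<Theta> L) V) (at 0 within {0..})"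
    using sq_line_deriv[of "proj \<Theta> X - proj \<Theta> L" "proj \<Theta> V"] by (simp add: inner_proj)
  have d1: "((\<lambda>\<tau>. \<Sum>(i, j)\<in>Er. \<Omega> (norm ((L $ i - L $ j) + \<tau> *\<^sub>R (V $ i - V $ j)))) has_real_derivative
     (\<Sum>(i, j)\<in>Er. d\<Omega> (norm (L $ i - L $ j)) * nd (L $ i - L $ j) (V $ i - V $ j))) (at 0 within {0..})"
    by (rule DERIV_sum_pairs, rule Omega_line_deriv[OF deriv])
  have d2: "((\<lambda>\<tau>. \<Sum>(i, j)\<in>Ec. \<Omega> (norm ((column i L - column j L) + \<tau> *\<^sub>R (column i V - column j V)))) has_real_derivative
     (\<Sum>(i, j)\<in>Ec. d\<Omega> (norm (column i L - column j L)) * nd (column i L - column j L) (column i V - column j V))) (at 0 within {0..})"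
    by (rule DERIV_sum_pairs, rule Omega_line_deriv[OF deriv])
  show ?thesis unfolding obj_line Dval_def
    by (intro DERIV_add DERIV_cmult d0 d1 d2)
qed

lemma psi_deriv:
  fixes X L V :: "real^'n^'m"
  shows "((\<lambda>\<tau>. surrogate X \<Theta> \<gamma>r \<gamma>c Er Ec d\<Omega> L (L + \<tau> *\<^sub>R V)) has_real_derivative
          Dval X \<Theta> \<gamma>r \<gamma>c Er Ec d\<Omega> L V) (at 0 within {0..})"
proof -
  have d0: "((\<lambda>\<tau>. (1/2) * (norm ((proj \<Theta> X - proj \<Theta> L) - \<tau> *\<^sub>R V))\<^sup>2) has_real_derivative
     - inner (proj \<Theta> X - proj \<Theta> L) V) (at 0 within {0..})"
    by (rule sq_line_deriv)
  have d1: "((\<lambda>\<tau>. \<Sum>(i, j)\<in>Er. d\<Omega> (norm (L $ i - L $ j)) * norm ((L $ i - L $ j) + \<tau> *\<^sub>R (V $ i - V $ j))) has_real_derivative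
     (\<Sum>(i, j)\<in>Er. d\<Omega> (norm (L $ i - L $ j)) * nd (L $ i - L $ j) (V $ i - V $ j))) (at 0 within {0..})"
    by (rule DERIV_sum_pairs, rule DERIV_cmult, rule norm_line_deriv)
  have d2: "((\<lambda>\<tau>. \<Sum>(i, j)\<in>Ec. d\<Omega> (norm (column i L - column j L)) * norm ((column i L - column j L) + \<tau> *\<^sub>R (column i V - column j V))) has_real_derivative
     (\<Sum>(i, j)\<in>Ec. d\<Omega> (norm (column i L - column j L)) * nd (column i L - column j L) (column i V - column j V))) (at 0 within {0..})"
    by (rule DERIV_sum_pairs, rule DERIV_cmult, rule norm_line_deriv)
  show ?thesis unfolding sur_line Dval_def
    by (intro DERIV_add DERIV_cmult d0 d1 d2)
qed



definition clipm :: "real \<Rightarrow> real^'n^'m \<Rightarrow> real^'n^'m" where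
  "clipm M U = (\<chi> i j. max (-M) (min M (U $ i $ j)))"

definition inBox :: "real \<Rightarrow> real^'n^'m \<Rightarrow> bool" where
  "inBox M U \<longleftrightarrow> (\<forall>i j. \<bar>U $ i $ j\<bar> \<le> M)"

lemma clip_scalar: "\<bar>max (-M) (min M a) - max (-M) (min M b)\<bar> \<le> \<bar>a - b\<bar>" for M a b :: real
  by (auto simp: max_def min_def abs_if)

lemma clip_entry:
  fixes y u M :: real
  assumes "\<bar>y\<bar> \<le> M"
  shows "\<bar>y - max (-M) (min M u)\<bar> \<le> \<bar>y - u\<bar>"
    and "\<bar>u\<bar> > M \<Longrightarrow> \<bar>y - max (-M) (min M u)\<bar> < \<bar>y - u\<bar>"
  using assms by (smt (verit))+

lemma clip_row: "norm (clipm M U $ i - clipm M U $ j) \<le> norm (U $ i - U $ j)"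
  by (rule norm_le_componentwise_cart) (simp add: clipm_def clip_scalar)

lemma clip_col: "norm (column i (clipm M U) - column j (clipm M U)) \<le> norm (column i U - column j U)"
  by (rule norm_le_componentwise_cart) (simp add: clipm_def column_def clip_scalar)

lemma clip_data_strict:
  fixes Y U :: "real^'n^'m"
  assumes Y: "inBox M Y" and U: "\<not> inBox M U"
  shows "(norm (Y - clipm M U))\<^sup>2 < (norm (Y - U))\<^sup>2"
proof -
  from U obtain i0 j0 where ij: "\<bar>U $ i0 $ j0\<bar> > M" by (auto simp: inBox_def not_le)
  have le: "((Y - clipm M U) $ i $ j)\<^sup>2 \<le> ((Y - U) $ i $ j)\<^sup>2" for i j
  proof -
    have "\<bar>(Y - clipm M U) $ i $ j\<bar> \<le> \<bar>(Y - U) $ i $ j\<bar>"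
      using clip_entry(1)[of "Y $ i $ j" M "U $ i $ j"] Y by (simp add: inBox_def clipm_def)
    then show ?thesis by (simp add: abs_le_square_iff)
  qed
  have lt: "((Y - clipm M U) $ i0 $ j0)\<^sup>2 < ((Y - U) $ i0 $ j0)\<^sup>2"
  proof -
    have "\<bar>(Y - clipm M U) $ i0 $ j0\<bar> < \<bar>(Y - U) $ i0 $ j0\<bar>"
      using clip_entry(2)[of "Y $ i0 $ j0" M "U $ i0 $ j0"] Y ij by (simp add: inBox_def clipm_def)
    then show ?thesis by (metis abs_le_square_iff not_le)
  qed
  show ?thesis unfolding norm_sq_mat
  proof (rule sum_strict_mono_ex1)
    show "\<forall>i\<in>UNIV. (\<Sum>j\<in>UNIV. ((Y - clipm M U) $ i $ j)\<^sup>2) \<le> (\<Sum>j\<in>UNIV. ((Y - U) $ i $ j)\<^sup>2)"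
      using le by (auto intro: sum_mono)
    show "\<exists>i\<in>UNIV. (\<Sum>j\<in>UNIV. ((Y - clipm M U) $ i $ j)\<^sup>2) < (\<Sum>j\<in>UNIV. ((Y - U) $ i $ j)\<^sup>2)"
      using le lt by (intro bexI[of _ i0] sum_strict_mono_ex1) auto
  qed simp
qed

lemma arith_strict:
  fixes a b r1 r2 c1 c2 :: real
  shows "a < b \<Longrightarrow> r1 \<le> r2 \<Longrightarrow> c1 \<le> c2 \<Longrightarrow> (1/2)*a + r1 + c1 < (1/2)*b + r2 + c2"
  by linarith

lemma surrogate_clip:
  fixes X V U :: "real^'n^'m"
  assumes box: "inBox M (proj \<Theta> X + proj (- \<Theta>) V)" and U: "\<not> inBox M U"
    and gr: "\<gamma>r \<ge> 0" and gc: "\<gamma>c \<ge> 0"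
    and w: "\<And>x. x \<ge> 0 \<Longrightarrow> d\<Omega> x \<ge> 0"
  shows "surrogate X \<Theta> \<gamma>r \<gamma>c Er Ec d\<Omega> V (clipm M U) < surrogate X \<Theta> \<gamma>r \<gamma>c Er Ec d\<Omega> V U"
proof -
  have d: "(norm (proj \<Theta> X + proj (- \<Theta>) V - clipm M U))\<^sup>2 < (norm (proj \<Theta> X + proj (- \<Theta>) V - U))\<^sup>2"
    by (rule clip_data_strict[OF box U])
  have r: "\<gamma>r * (\<Sum>(i, j)\<in>Er. d\<Omega> (norm (V $ i - V $ j)) * norm (clipm M U $ i - clipm M U $ j))
     \<le> \<gamma>r * (\<Sum>(i, j)\<in>Er. d\<Omega> (norm (V $ i - V $ j)) * norm (U $ i - U $ j))"
    by (intro mult_left_mono gr sum_mono) (auto intro!: mult_left_mono clip_row w)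
  have c: "\<gamma>c * (\<Sum>(i, j)\<in>Ec. d\<Omega> (norm (column i V - column j V)) * norm (column i (clipm M U) - column j (clipm M U)))
     \<le> \<gamma>c * (\<Sum>(i, j)\<in>Ec. d\<Omega> (norm (column i V - column j V)) * norm (column i U - column j U))"
    by (intro mult_left_mono gc sum_mono) (auto intro!: mult_left_mono clip_col w)
  show ?thesis
    apply (unfold surrogate_def Let_def)
    apply (rule arith_strict)
      apply (rule d)
     apply (rule r)
    apply (rule c)
    done
qed

lemma bounded_box:
  "bounded {U :: real^'n^'m. inBox M U}"
  unfolding bounded_iff
proof (intro exI ballI)
  fix U :: "real^'n^'m" assume "U \<in> {U. inBox M U}"
  then have b: "\<And>i j. \<bar>U $ i $ j\<bar> \<le> M" by (auto simp: inBox_def)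
  have "norm U \<le> (\<Sum>i\<in>UNIV. norm (U $ i))"
    unfolding norm_vec_def by (rule L2_set_le_sum) simp
  also have "\<dots> \<le> (\<Sum>i\<in>UNIV. \<Sum>j\<in>UNIV. \<bar>U $ i $ j\<bar>)"
    by (intro sum_mono norm_le_l1_cart)
  also have "\<dots> \<le> (\<Sum>i\<in>(UNIV::'m set). \<Sum>j\<in>(UNIV::'n set). M)"
    by (intro sum_mono b)
  finally show "norm U \<le> (\<Sum>i\<in>(UNIV::'m set). \<Sum>j\<in>(UNIV::'n set). M)" .
qed



lemma entry_le_sum: "\<bar>A $ i $ j\<bar> \<le> (\<Sum>i\<in>UNIV. \<Sum>j\<in>UNIV. \<bar>(A::real^'n^'m) $ i $ j\<bar>)"
proof -
  have "\<bar>A $ i $ j\<bar> \<le> (\<Sum>j\<in>UNIV. \<bar>A $ i $ j\<bar>)" by (rule member_le_sum) auto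
  also have "\<dots> \<le> (\<Sum>i\<in>UNIV. \<Sum>j\<in>UNIV. \<bar>A $ i $ j\<bar>)"
    by (rule member_le_sum[where f="\<lambda>i. \<Sum>j\<in>UNIV. \<bar>A $ i $ j\<bar>"]) (auto intro: sum_nonneg)
  finally show ?thesis .
qed

theorem proposition1:
  fixes X :: "real^'n^'m"
    and \<Theta> :: "('m \<times> 'n) set"
    and \<gamma>r \<gamma>c :: real
    and Er :: "('m \<times> 'm) set" and Ec :: "('n \<times> 'n) set"
    and \<Omega> d\<Omega> :: "real \<Rightarrow> real"
    and U :: "nat \<Rightarrow> real^'n^'m"
  assumes "\<gamma>r \<ge> 0" and "\<gamma>c \<ge> 0"
    and conn_r: "\<forall>i j. i \<noteq> j \<longrightarrow> (i, j) \<in> Er\<^sup>+"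
    and conn_c: "\<forall>i j. i \<noteq> j \<longrightarrow> (i, j) \<in> Ec\<^sup>+"
    and nonneg: "\<forall>x\<ge>0. \<Omega> x \<ge> 0"
    and concave: "concave_on {0..} \<Omega>"
    and deriv: "\<forall>x\<ge>0. (\<Omega> has_real_derivative d\<Omega> x) (at x within {0..})"
    and cont_deriv: "continuous_on {0<..} d\<Omega>"
    and zero: "\<Omega> 0 = 0"
    and incr: "mono_on {0..} \<Omega>"
    and step: "\<forall>t W. surrogate X \<Theta> \<gamma>r \<gamma>c Er Ec d\<Omega> (U t) (U (Suc t))
                      \<le> surrogate X \<Theta> \<gamma>r \<gamma>c Er Ec d\<Omega> (U t) W"
  shows "(\<exists>L. limit_point U L) \<and>
         (\<forall>L. limit_point U L \<longrightarrow> stationary_point (objective X \<Theta> \<gamma>r \<gamma>c Er Ec \<Omega>) L)"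
proof -
  note gr = assms(1) and gc = assms(2)
  have dpos: "\<And>x. x \<ge> 0 \<Longrightarrow> d\<Omega> x \<ge> 0" using dOmega_nonneg[OF concave deriv incr] .
  have contO: "continuous_on {0..} \<Omega>" using Omega_cont[OF concave deriv] .
  have contD: "continuous_on {0..} d\<Omega>" using dOmega_cont[OF concave deriv cont_deriv] .
  define f where "f = objective X \<Theta> \<gamma>r \<gamma>c Er Ec \<Omega>"
  define S where "S = surrogate X \<Theta> \<gamma>r \<gamma>c Er Ec d\<Omega>"
  define c where "c = cterm Er Ec \<gamma>r \<gamma>c \<Omega> d\<Omega>"
  have maj: "\<And>V W. f W \<le> S V W + c V"
    unfolding f_def S_def c_def by (rule majorize[OF concave deriv gr gc])
  have eqa: "\<And>V. f V = S V V + c V"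
    unfolding f_def S_def c_def by (rule equal_at)
  have stepS: "\<And>t W. S (U t) (U (Suc t)) \<le> S (U t) W" using step unfolding S_def by blast

  define M where "M = (\<Sum>i\<in>UNIV. \<Sum>j\<in>UNIV. \<bar>X $ i $ j\<bar>) + (\<Sum>i\<in>UNIV. \<Sum>j\<in>UNIV. \<bar>U 0 $ i $ j\<bar>)"
  have s1: "0 \<le> (\<Sum>i\<in>UNIV. \<Sum>j\<in>UNIV. \<bar>X $ i $ j\<bar>)" by (intro sum_nonneg) auto
  have s2: "0 \<le> (\<Sum>i\<in>UNIV. \<Sum>j\<in>UNIV. \<bar>U 0 $ i $ j\<bar>)" by (intro sum_nonneg) auto
  have bX: "\<bar>X $ i $ j\<bar> \<le> M" for i j using entry_le_sum[of X i j] s2 unfolding M_def by linarith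
  have b0: "\<bar>U 0 $ i $ j\<bar> \<le> M" for i j using entry_le_sum[of "U 0" i j] s1 unfolding M_def by linarith
  have box: "inBox M (U t)" for t
  proof (induction t)
    case 0 then show ?case using b0 by (simp add: inBox_def)
  next
    case (Suc t)
    have Xt: "inBox M (proj \<Theta> X + proj (- \<Theta>) (U t))"
      using Suc bX by (auto simp: inBox_def proj_nth)
    show ?case
    proof (rule ccontr)
      assume "\<not> inBox M (U (Suc t))"
      from surrogate_clip[OF Xt this gr gc dpos]
      have "S (U t) (clipm M (U (Suc t))) < S (U t) (U (Suc t))" unfolding S_def .
      with stepS[of t "clipm M (U (Suc t))"] show False by simp
    qed
  qed
  have bnd: "bounded (range U)"
    by (rule bounded_subset[OF bounded_box]) (use box in auto)
  from bounded_imp_convergent_subsequence[OF bnd]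
  have part1: "\<exists>L. limit_point U L" by (auto simp: limit_point_def)

  have dec1: "f (U (Suc t)) \<le> f (U t)" for t
  proof -
    have "f (U (Suc t)) \<le> S (U t) (U (Suc t)) + c (U t)" by (rule maj)
    also have "\<dots> \<le> S (U t) (U t) + c (U t)" using stepS[of t "U t"] by simp
    also have "\<dots> = f (U t)" by (rule eqa[symmetric])
    finally show ?thesis .
  qed
  have decs: "decseq (\<lambda>t. f (U t))" by (rule decseq_SucI) (rule dec1)
  have contf: "continuous_on UNIV f" unfolding f_def by (rule cont_objective[OF contO])
  have contG: "\<And>W. continuous_on UNIV (\<lambda>V. S V W + c V)"
    unfolding S_def c_def by (rule cont_G[OF contO contD])

  have part2: "stationary_point f L" if lp: "limit_point U L" for L
  proof -
    from lp obtain r where r: "strict_mono r" "(U \<circ> r) \<longlonglongrightarrow> L" by (auto simp: limit_point_def)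
    have Ur: "(\<lambda>k. U (r k)) \<longlonglongrightarrow> L" using r(2) by (simp add: o_def)
    have isf: "isCont f L" using contf by (simp add: continuous_on_eq_continuous_at)
    have fr: "(\<lambda>k. f (U (r k))) \<longlonglongrightarrow> f L" by (rule isCont_tendsto_compose[OF isf Ur])
    have fL: "f L \<le> f (U t)" for t
    proof (rule LIMSEQ_le_const2[OF fr])
      show "\<exists>N. \<forall>n\<ge>N. f (U (r n)) \<le> f (U t)"
      proof (intro exI allI impI)
        fix n assume "n \<ge> t"
        then have "t \<le> r n" using seq_suble[OF r(1), of n] by simp
        then show "f (U (r n)) \<le> f (U t)" using decseqD[OF decs] by blast
      qed
    qed
    have Gmin: "S L L \<le> S L W" for W
    proof -
      have isG: "isCont (\<lambda>V. S V W + c V) L" using contG[of W] by (simp add: continuous_on_eq_continuous_at)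
      have Gr: "(\<lambda>k. S (U (r k)) W + c (U (r k))) \<longlonglongrightarrow> S L W + c L"
        by (rule isCont_tendsto_compose[OF isG Ur])
      have "f L \<le> S L W + c L"
      proof (rule LIMSEQ_le_const[OF Gr])
        show "\<exists>N. \<forall>n\<ge>N. f L \<le> S (U (r n)) W + c (U (r n))"
        proof (intro exI allI impI)
          fix n :: nat
          have "f L \<le> f (U (Suc (r n)))" by (rule fL)
          also have "\<dots> \<le> S (U (r n)) (U (Suc (r n))) + c (U (r n))" by (rule maj)
          also have "\<dots> \<le> S (U (r n)) W + c (U (r n))" using stepS[of "r n" W] by simp
          finally show "f L \<le> S (U (r n)) W + c (U (r n))" .
        qed
      qed
      then show ?thesis using eqa[of L] by simp
    qed
    show ?thesis unfolding stationary_point_def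
    proof
      fix V
      let ?D = "Dval X \<Theta> \<gamma>r \<gamma>c Er Ec d\<Omega> L V"
      have pd: "((\<lambda>\<tau>. f (L + \<tau> *\<^sub>R V)) has_real_derivative ?D) (at 0 within {0..})"
        unfolding f_def by (rule phi_deriv[OF deriv])
      have sd: "((\<lambda>\<tau>. S L (L + \<tau> *\<^sub>R V)) has_real_derivative ?D) (at 0 within {0..})"
        unfolding S_def by (rule psi_deriv)
      have "((\<lambda>y. (f (L + y *\<^sub>R V) - f (L + 0 *\<^sub>R V)) / (y - 0)) \<longlongrightarrow> ?D) (at 0 within {0..})"
        using pd by (simp add: has_field_derivative_iff)
      then have h1: "has_dir_deriv f L V ?D"
        unfolding has_dir_deriv_def by (simp add: at_within_Ici_at_right)
      have "((\<lambda>y. (S L (L + y *\<^sub>R V) - S L (L + 0 *\<^sub>R V)) / (y - 0)) \<longlongrightarrow> ?D) (at 0 within {0..})"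
        using sd by (simp add: has_field_derivative_iff)
      then have h2: "((\<lambda>y. (S L (L + y *\<^sub>R V) - S L L) / y) \<longlongrightarrow> ?D) (at_right 0)"
        by (simp add: at_within_Ici_at_right)
      have ev: "eventually (\<lambda>y. 0 \<le> (S L (L + y *\<^sub>R V) - S L L) / y) (at_right 0)"
        by (rule eventually_mono[OF eventually_at_right_less]) (use Gmin in simp)
      have "0 \<le> ?D" by (rule tendsto_lowerbound[OF h2 ev]) simp
      with h1 show "\<exists>d. has_dir_deriv f L V d \<and> d \<ge> 0" by blast
    qed
  qed
  show ?thesis using part1 part2 unfolding f_def by blast
qed


end
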